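(* Let $(p,q,r)$ be a triple on the boundary of the local $L^2$-range, i.e. $2\le p,q\le\infty$, $\frac1p+\frac1q=\frac1r$, $\frac1p+\frac1q\ge\frac12$, and at least one of $p=2$, $q=2$, $r=2$ holds. Then the function $m(\xi,\eta)=e^{i\xi\cdot\eta}$ on $\mathbb{R}^n\times\mathbb{R}^n$ does not belong to $\mathcal M_{p,q,r}(\mathbb{R}^n)$.
   Context: Fourier transform: $\hat f(\xi)=\int_{\mathbb{R}^n} f(x)e^{-2\pi i x\cdot \xi}dx$. For bounded measurable $m$ on $\mathbb{R}^n\times\mathbb{R}^n$, $M_m(f,g)(x)=\int\int\hat f(\xi)\hat g(\eta)m(\xi,\eta)e^{2\pi i x\cdot(\xi+\eta)}d\xi d\eta$ for Schwartz $f,g$; $m\in\mathcal M_{p,q,r}(\mathbb{R}^n)$ means $M_m$ extends to a bounded bilinear operator $L^p(\mathbb{R}^n)\times L^q(\mathbb{R}^n)\to L^r(\mathbb{R}^n)$. The local $L^2$-range is the set of triples with $2\le p,q,r'\le\infty$ and $\frac1p+\frac1q=\frac1r$. *)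

theory Defs
  imports "HOL-Analysis.Analysis" "HOL-Probability.Essential_Supremum"
begin

fun deriv_seq :: "'a::euclidean_space list \<Rightarrow> ('a \<Rightarrow> complex) \<Rightarrow> ('a \<Rightarrow> complex)" where
  "deriv_seq [] f = f"
| "deriv_seq (v # vs) f = (\<lambda>x. frechet_derivative (deriv_seq vs f) (at x) v)"

definition schwartz :: "('a::euclidean_space \<Rightarrow> complex) \<Rightarrow> bool" where
  "schwartz f \<longleftrightarrow>
     (\<forall>vs. set vs \<subseteq> Basis \<longrightarrow>
        (\<forall>x. deriv_seq vs f differentiable (at x)) \<and>
        (\<forall>k::nat. bounded (range (\<lambda>x. norm x ^ k * norm (deriv_seq vs f x)))))"

definition fourier :: "('a::euclidean_space \<Rightarrow> complex) \<Rightarrow> 'a \<Rightarrow> complex" where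
  "fourier f \<xi> = (LINT x|lborel. f x * cis (- 2 * pi * (x \<bullet> \<xi>)))"

definition bilin_mult ::
  "('a::euclidean_space \<Rightarrow> 'a \<Rightarrow> complex) \<Rightarrow> ('a \<Rightarrow> complex) \<Rightarrow> ('a \<Rightarrow> complex) \<Rightarrow> 'a \<Rightarrow> complex" where
  "bilin_mult m f g x =
     (LINT \<xi>|lborel. LINT \<eta>|lborel.
        fourier f \<xi> * fourier g \<eta> * m \<xi> \<eta> * cis (2 * pi * (x \<bullet> (\<xi> + \<eta>))))"

definition Lp_norm :: "ereal \<Rightarrow> ('a::euclidean_space \<Rightarrow> complex) \<Rightarrow> ennreal" where
  "Lp_norm p h =
     (if p = \<infinity> then esssup lborel (\<lambda>x. ennreal (norm (h x)))
      else (let I = (\<integral>\<^sup>+ x. ennreal (norm (h x) powr real_of_ereal p) \<partial>lborel)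
            in if I = \<infinity> then \<infinity> else ennreal (enn2real I powr (1 / real_of_ereal p))))"

definition bilinear_multiplier_class :: "ereal \<Rightarrow> ereal \<Rightarrow> ereal \<Rightarrow> ('a::euclidean_space \<Rightarrow> 'a \<Rightarrow> complex) \<Rightarrow> bool" where
  "bilinear_multiplier_class p q r m \<longleftrightarrow>
     (\<exists>C::real. \<forall>f g. schwartz f \<longrightarrow> schwartz g \<longrightarrow>
        Lp_norm r (bilin_mult m f g) \<le> ennreal C * Lp_norm p f * Lp_norm q g)"

end

theory Submission
  imports Defs "HOL-Probability.Probability" "HOL-Complex_Analysis.Complex_Analysis" "HOL-Real_Asymp.Real_Asymp"
begin

lemma std_gauss_char:
  fixes v :: real
  shows "has_bochner_integral lborel (\<lambda>x. complex_of_real (exp (- x\<^sup>2 / 2)) * exp (\<i> * complex_of_real (v * x)))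
           (complex_of_real (sqrt (2*pi) * exp (- v\<^sup>2 / 2)))"
proof -
  interpret real_distribution std_normal_distribution by (rule real_dist_normal_dist)
  have int1: "integrable std_normal_distribution (\<lambda>x. iexp (v * x))"
    by (rule integrable_const_bound[where B=1]) (auto simp: norm_exp_i_times)
  have hb: "has_bochner_integral std_normal_distribution (\<lambda>x. iexp (v * x)) (complex_of_real (exp (- v\<^sup>2 / 2)))"
    using int1 char_std_normal_distribution unfolding char_def
    by (metis has_bochner_integral_integrable) 
  have "has_bochner_integral lborel (\<lambda>x. std_normal_density x *\<^sub>R iexp (v * x)) (complex_of_real (exp (- v\<^sup>2 / 2)))"
    using hb by (simp add: has_bochner_integral_iff integrable_density integral_density)
  then have "has_bochner_integral lborel (\<lambda>x. complex_of_real (sqrt (2*pi)) * (std_normal_density x *\<^sub>R iexp (v * x)))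
      (complex_of_real (sqrt (2*pi)) * complex_of_real (exp (- v\<^sup>2 / 2)))"
    by (rule has_bochner_integral_mult_right)
  then show ?thesis
    by (simp add: std_normal_density_def scaleR_conv_of_real)
qed

lemma real_gauss_complex_lin:
  fixes a :: real and w :: complex
  assumes a: "a > 0"
  shows "has_bochner_integral lborel (\<lambda>t::real. exp (- (complex_of_real a * complex_of_real t ^ 2) + w * complex_of_real t))
           (complex_of_real (sqrt (pi / a)) * exp (w ^ 2 / (4 * complex_of_real a)))"
proof -
  define u where "u = Re w"
  define v where "v = Im w"
  have w: "w = complex_of_real u + \<i> * complex_of_real v" by (simp add: u_def v_def complex_eq)
  define s where "s = 1 / sqrt (2 * a)"
  define m where "m = u / (2 * a)"
  have s0: "s > 0" using a by (simp add: s_def)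
  have ss: "s^2 = 1 / (2*a)" using a by (simp add: s_def power_divide)
  let ?f = "\<lambda>t::real. exp (- (complex_of_real a * complex_of_real t ^ 2) + w * complex_of_real t)"
  have key: "?f (m + s * x) = complex_of_real (exp (u^2 / (4*a))) * exp (\<i> * complex_of_real (v * m)) *
               (complex_of_real (exp (- x\<^sup>2 / 2)) * exp (\<i> * complex_of_real ((v * s) * x)))" for x
  proof -
    have e: "- (complex_of_real a * complex_of_real (m + s*x) ^ 2) + w * complex_of_real (m + s*x)
         = complex_of_real (u^2 / (4*a)) + \<i> * complex_of_real (v * m) + (complex_of_real (- x\<^sup>2 / 2) + \<i> * complex_of_real ((v * s) * x))"
    proof -
      have r: "- (a * (m + s*x)^2) + u * (m + s*x) = u^2/(4*a) + (- x\<^sup>2 / 2)"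
        using a ss unfolding m_def by (simp add: field_simps power2_eq_square)
      have r2: "Re (complex_of_real a * complex_of_real (m + s*x) ^ 2) = a * (m + s*x)^2"
        "Im (complex_of_real a * complex_of_real (m + s*x) ^ 2) = 0"
        by (simp_all add: power2_eq_square)
      show ?thesis unfolding complex_eq_iff using r r2 by (simp add: w algebra_simps)
    qed
    show ?thesis unfolding e by (simp only: exp_add exp_of_real)
  qed
  have h1: "has_bochner_integral lborel (\<lambda>x. ?f (m + s * x))
     (complex_of_real (exp (u^2 / (4*a))) * exp (\<i> * complex_of_real (v * m)) *
      complex_of_real (sqrt (2*pi) * exp (- (v * s)\<^sup>2 / 2)))"
    unfolding key by (rule has_bochner_integral_mult_right) (rule std_gauss_char)
  define X where "X = s *\<^sub>R (complex_of_real (exp (u^2 / (4*a))) * exp (\<i> * complex_of_real (v * m)) *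
      complex_of_real (sqrt (2*pi) * exp (- (v * s)\<^sup>2 / 2)))"
  have "has_bochner_integral lborel ?f X"
    using lborel_has_bochner_integral_real_affine_iff[of s ?f X m] s0 h1 by (simp add: X_def)
  moreover have "X = complex_of_real (sqrt (pi / a)) * exp (w ^ 2 / (4 * complex_of_real a))"
  proof -
    have e1: "s * sqrt (2*pi) = sqrt (pi / a)"
      using a by (simp add: s_def real_sqrt_divide real_sqrt_mult field_simps)
    have e2: "w ^ 2 / (4 * complex_of_real a) = complex_of_real (u^2 / (4*a)) + \<i> * complex_of_real (v * m)
               + complex_of_real (- (v * s)\<^sup>2 / 2)"
      using a ss unfolding complex_eq_iff w m_def
      by (simp add: power2_eq_square field_simps Re_divide Im_divide)
    show ?thesis unfolding X_def e2 exp_add exp_of_real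
      by (simp add: scaleR_conv_of_real e1[symmetric] mult_ac)
  qed
  ultimately show ?thesis by simp
qed

definition gk :: "complex \<Rightarrow> complex \<Rightarrow> real \<Rightarrow> complex" where
  "gk z w t = exp (- (z * complex_of_real t ^ 2) + w * complex_of_real t)"

lemma gk_meas[measurable]: "gk z w \<in> borel_measurable borel"
  unfolding gk_def by measurable

lemma gk_cont: "continuous_on S (gk z w)"
  unfolding gk_def by (intro continuous_intros)

lemma norm_gk: "norm (gk z w t) = exp (- Re z * t\<^sup>2 + Re w * t)"
  unfolding gk_def norm_exp_eq_Re by (simp add: power2_eq_square)

lemma gk_real_hb:
  assumes "a > 0"
  shows "has_bochner_integral lborel (gk (complex_of_real a) w) (complex_of_real (sqrt (pi / a)) * exp (w ^ 2 / (4 * complex_of_real a)))"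
  using real_gauss_complex_lin[OF assms, of w] unfolding gk_def by simp

lemma gk_integrable:
  assumes "Re z > 0"
  shows "integrable lborel (gk z w)"
proof -
  have "integrable lborel (gk (complex_of_real (Re z)) (complex_of_real (Re w)))"
    using gk_real_hb[OF assms] by (auto simp: has_bochner_integral_iff)
  then show ?thesis
    by (rule Bochner_Integration.integrable_bound) (auto simp: norm_gk)
qed

lemma dom_integrable:
  fixes d b :: real
  assumes "d > 0"
  shows "integrable lborel (\<lambda>t. exp (- d * t\<^sup>2 + b * \<bar>t\<bar>))"
proof -
  have i1: "integrable lborel (\<lambda>t. norm (gk (complex_of_real d) (complex_of_real b) t) + norm (gk (complex_of_real d) (complex_of_real (-b)) t))"
    using gk_integrable[of "complex_of_real d"] assms by (intro Bochner_Integration.integrable_add integrable_norm) auto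
  show ?thesis
  proof (rule Bochner_Integration.integrable_bound[OF i1])
    show "AE x in lborel. norm (exp (- d * x\<^sup>2 + b * \<bar>x\<bar>)) \<le> norm (norm (gk (complex_of_real d) (complex_of_real b) x) + norm (gk (complex_of_real d) (complex_of_real (-b)) x))"
    proof (intro AE_I2)
      fix x :: real
      have p: "exp (- d * x\<^sup>2 + b * \<bar>x\<bar>) \<le> exp (- d * x\<^sup>2 + b * x) + exp (- d * x\<^sup>2 + (- b) * x)"
      proof (cases "x \<ge> 0")
        case True then show ?thesis by (simp add: add_increasing2)
      next
        case False then show ?thesis by (simp add: add_increasing)
      qed
      then show "norm (exp (- d * x\<^sup>2 + b * \<bar>x\<bar>)) \<le> norm (norm (gk (complex_of_real d) (complex_of_real b) x) + norm (gk (complex_of_real d) (complex_of_real (-b)) x))"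
        by (simp add: norm_gk)
    qed
  qed measurable
qed

lemma gk_trunc_holo: "(\<lambda>z. integral {-c..c} (gk z w)) holomorphic_on {z. 0 < Re z}"
  unfolding holomorphic_on_def
proof
  fix z0 :: complex assume z0: "z0 \<in> {z. 0 < Re z}"
  have "(\<lambda>z. integral (cbox (-c) c) (gk z w)) field_differentiable at z0 within {z. 0 < Re z}"
  proof (rule leibniz_rule_field_differentiable[where fx="\<lambda>z t. - (complex_of_real t ^ 2) * gk z w t"])
    show "((\<lambda>z. gk z w t) has_field_derivative - (complex_of_real t ^ 2) * gk x w t) (at x within {z. 0 < Re z})" for x t
      unfolding gk_def by (auto intro!: derivative_eq_intros)
    show "gk x w integrable_on cbox (- c) c" for x
      by (rule integrable_continuous) (rule gk_cont)
    show "continuous_on ({z. 0 < Re z} \<times> cbox (- c) c) (\<lambda>(x, t). - (complex_of_real t ^ 2) * gk x w t)"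
      unfolding gk_def case_prod_unfold by (intro continuous_intros)
    show "convex {z. 0 < Re z}" by (rule convex_halfspace_Re_gt)
  qed (use z0 in auto)
  then show "(\<lambda>z. integral {-c..c} (gk z w)) field_differentiable at z0 within {z. 0 < Re z}"
    by simp
qed

lemma trunc_eq:
  assumes "Re z > 0"
  shows "(LINT t|lborel. gk z w t) - integral {-c..c} (gk z w) = (LINT t|lborel. indicator (- {-c..c}) t *\<^sub>R gk z w t)"
proof -
  have si: "set_integrable lborel {-c..c} (gk z w)"
    by (rule borel_integrable_atLeastAtMost') (rule gk_cont)
  have e1: "integral {-c..c} (gk z w) = (LINT t|lborel. indicator {-c..c} t *\<^sub>R gk z w t)"
    using set_borel_integral_eq_integral(2)[OF si] by (simp add: set_lebesgue_integral_def)
  have i2: "integrable lborel (\<lambda>t. indicator {-c..c} t *\<^sub>R gk z w t)"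
    using si by (simp add: set_integrable_def)
  have "(LINT t|lborel. gk z w t) - (LINT t|lborel. indicator {-c..c} t *\<^sub>R gk z w t)
      = (LINT t|lborel. gk z w t - indicator {-c..c} t *\<^sub>R gk z w t)"
    using gk_integrable[OF assms] i2 by (simp add: Bochner_Integration.integral_diff)
  also have "\<dots> = (LINT t|lborel. indicator (- {-c..c}) t *\<^sub>R gk z w t)"
    by (intro Bochner_Integration.integral_cong) (auto split: split_indicator)
  finally show ?thesis using e1 by simp
qed

lemma tail_tendsto:
  fixes d b :: real
  assumes "d > 0"
  shows "(\<lambda>n::nat. LINT t|lborel. indicator (- {- real n..real n}) t * exp (- d * t\<^sup>2 + b * \<bar>t\<bar>)) \<longlonglongrightarrow> 0"
proof -
  have i: "integrable lborel (\<lambda>t. exp (- d * t\<^sup>2 + b * \<bar>t\<bar>))" by (rule dom_integrable[OF assms])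
  have l: "AE x in lborel. (\<lambda>n::nat. indicator (- {- real n..real n}) x * exp (- d * x\<^sup>2 + b * \<bar>x\<bar>)) \<longlonglongrightarrow> 0"
  proof (intro AE_I2 tendsto_eventually)
    fix x :: real
    obtain N :: nat where N: "\<bar>x\<bar> \<le> real N" using real_arch_simple by blast
    show "\<forall>\<^sub>F n in sequentially. indicator (- {- real n..real n}) x * exp (- d * x\<^sup>2 + b * \<bar>x\<bar>) = 0"
      using eventually_ge_at_top[of N]
      by eventually_elim (use N in \<open>auto simp: indicator_def abs_le_iff\<close>)
  qed
  have bd: "AE x in lborel. norm (indicator (- {- real n..real n}) x * exp (- d * x\<^sup>2 + b * \<bar>x\<bar>)) \<le> exp (- d * x\<^sup>2 + b * \<bar>x\<bar>)" for n :: nat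
    by (intro AE_I2) (auto simp: indicator_def)
  have "(\<lambda>n::nat. LINT t|lborel. indicator (- {- real n..real n}) t * exp (- d * t\<^sup>2 + b * \<bar>t\<bar>)) \<longlonglongrightarrow> (LINT t|lborel. (0::real))"
    using Bochner_Integration.integral_dominated_convergence[of "\<lambda>t. 0" lborel "\<lambda>n t. indicator (- {- real n..real n}) t * exp (- d * t\<^sup>2 + b * \<bar>t\<bar>)",
       OF _ _ i l bd] by simp
  then show ?thesis by simp
qed

lemma gk_holo: "(\<lambda>z. LINT t|lborel. gk z w t) holomorphic_on {z. 0 < Re z}"
proof -
  let ?H = "{z::complex. 0 < Re z}"
  let ?G = "\<lambda>z. LINT t|lborel. gk z w t"
  have oH: "open ?H" by (rule open_halfspace_Re_gt)
  have loc: "\<exists>r>0. ?G holomorphic_on ball z0 r" if z0: "z0 \<in> ?H" for z0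
  proof -
    define r where "r = Re z0 / 2"
    have r0: "r > 0" using z0 by (simp add: r_def)
    have sub: "Re z \<ge> r" if "z \<in> cball z0 r" for z
    proof -
      have "\<bar>Re (z0 - z)\<bar> \<le> norm (z0 - z)" by (rule abs_Re_le_cmod)
      also have "\<dots> \<le> r" using that by (simp add: dist_norm)
      finally have "\<bar>Re z0 - Re z\<bar> \<le> Re z0 / 2" by (simp add: r_def)
      then show ?thesis unfolding r_def abs_le_iff by linarith
    qed
    have cb: "cball z0 r \<subseteq> ?H" using sub r0 by fastforce
    define b where "b = \<bar>Re w\<bar>"
    define T where "T = (\<lambda>n::nat. LINT t|lborel. indicator (- {- real n..real n}) t * exp (- r * t\<^sup>2 + b * \<bar>t\<bar>))"
    have T: "T \<longlonglongrightarrow> 0" unfolding T_def by (rule tail_tendsto[OF r0])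
    have bound: "dist (integral {- real n..real n} (gk z w)) (?G z) \<le> T n" if z: "z \<in> cball z0 r" for z n
    proof -
      have rz: "Re z > 0" using sub[OF z] r0 by simp
      have "dist (integral {- real n..real n} (gk z w)) (?G z) = norm (?G z - integral {- real n..real n} (gk z w))"
        by (simp add: dist_norm norm_minus_commute)
      also have "\<dots> = norm (LINT t|lborel. indicator (- {- real n..real n}) t *\<^sub>R gk z w t)"
        by (simp add: trunc_eq[OF rz])
      also have "\<dots> \<le> T n"
        unfolding T_def
      proof (rule Bochner_Integration.integral_norm_bound_integral)
        show "integrable lborel (\<lambda>t. indicator (- {- real n..real n}) t *\<^sub>R gk z w t)"
          by (rule integrable_mult_indicator) (auto intro: gk_integrable[OF rz])
        show "integrable lborel (\<lambda>t. indicator (- {- real n..real n}) t * exp (- r * t\<^sup>2 + b * \<bar>t\<bar>))"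
          using integrable_mult_indicator[OF _ dom_integrable[OF r0, of b], of "- {- real n..real n}"] by simp
        fix t :: real
        have "Re z * t\<^sup>2 \<ge> r * t\<^sup>2" using sub[OF z] by (simp add: mult_right_mono)
        moreover have "Re w * t \<le> b * \<bar>t\<bar>" unfolding b_def by (metis abs_ge_self abs_mult)
        ultimately have "exp (- Re z * t\<^sup>2 + Re w * t) \<le> exp (- r * t\<^sup>2 + b * \<bar>t\<bar>)" by simp
        then show "norm (indicator (- {- real n..real n}) t *\<^sub>R gk z w t) \<le> indicator (- {- real n..real n}) t * exp (- r * t\<^sup>2 + b * \<bar>t\<bar>)"
          by (auto simp: norm_gk indicator_def)
      qed
      finally show ?thesis .
    qed
    have ul: "uniform_limit (cball z0 r) (\<lambda>n z. integral {- real n..real n} (gk z w)) ?G sequentially"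
      unfolding uniform_limit_iff
    proof (intro allI impI)
      fix e :: real assume e: "e > 0"
      have "\<forall>\<^sub>F n in sequentially. T n < e"
        using T e by (auto simp: tendsto_iff dist_norm dest!: spec[of _ e] elim: eventually_mono)
      then show "\<forall>\<^sub>F n in sequentially. \<forall>x\<in>cball z0 r. dist (integral {- real n..real n} (gk x w)) (?G x) < e"
        by eventually_elim (blast intro: le_less_trans bound)
    qed
    have ev: "\<forall>\<^sub>F n in sequentially. continuous_on (cball z0 r) (\<lambda>z. integral {- real n..real n} (gk z w)) \<and>
                 (\<lambda>z. integral {- real n..real n} (gk z w)) holomorphic_on ball z0 r"
    proof (intro always_eventually allI conjI)
      fix n :: nat
      show "continuous_on (cball z0 r) (\<lambda>z. integral {- real n..real n} (gk z w))"
        by (rule holomorphic_on_imp_continuous_on, rule holomorphic_on_subset[OF gk_trunc_holo cb])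
      show "(\<lambda>z. integral {- real n..real n} (gk z w)) holomorphic_on ball z0 r"
        by (rule holomorphic_on_subset[OF gk_trunc_holo]) (use cb ball_subset_cball in blast)
    qed
    obtain "continuous_on (cball z0 r) ?G" "?G holomorphic_on ball z0 r"
      by (rule holomorphic_uniform_limit[OF ev ul]) simp
    then show ?thesis using r0 by blast
  qed
  show ?thesis
    unfolding holomorphic_on_def
  proof
    fix z0 assume z0: "z0 \<in> ?H"
    obtain r where r: "r > 0" "?G holomorphic_on ball z0 r" using loc[OF z0] by blast
    have "?G field_differentiable at z0"
      using holomorphic_on_imp_differentiable_at[OF r(2)] r(1) by simp
    then show "?G field_differentiable at z0 within ?H" by (rule field_differentiable_at_within)
  qed
qed

lemma pi_div_not_nonpos: "Re z > 0 \<Longrightarrow> complex_of_real pi / z \<notin> \<real>\<^sub>\<le>\<^sub>0"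
proof
  assume z: "Re z > 0" and "complex_of_real pi / z \<in> \<real>\<^sub>\<le>\<^sub>0"
  then obtain c where c: "c \<le> 0" "complex_of_real pi / z = complex_of_real c"
    by (auto elim!: nonpos_Reals_cases)
  have z0: "z \<noteq> 0" using z by auto
  have "complex_of_real pi = complex_of_real c * z" using c(2) z0 by (simp add: field_simps)
  then have "Re (complex_of_real pi) = Re (complex_of_real c * z)" by simp
  then have "pi = c * Re z" by simp
  moreover have "c * Re z \<le> 0" using c(1) z by (simp add: mult_nonpos_nonneg)
  ultimately show False using pi_gt_zero by linarith
qed

lemma gk_complex:
  assumes z: "Re z > 0"
  shows "has_bochner_integral lborel (gk z w) (csqrt (complex_of_real pi / z) * exp (w ^ 2 / (4 * z)))"
proof -
  let ?H = "{z::complex. 0 < Re z}"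
  let ?G = "\<lambda>z. LINT t|lborel. gk z w t"
  let ?R = "\<lambda>z. csqrt (complex_of_real pi / z) * exp (w ^ 2 / (4 * z))"
  have "(\<lambda>z. ?G z - ?R z) z = 0"
  proof (rule analytic_continuation[where f="\<lambda>z. ?G z - ?R z" and S="?H" and U="complex_of_real ` {0<..}" and \<xi>=1])
    show "(\<lambda>z. ?G z - ?R z) holomorphic_on ?H"
      by (intro holomorphic_intros gk_holo) (auto simp: pi_div_not_nonpos)
    show "open ?H" by (rule open_halfspace_Re_gt)
    show "connected ?H" by (rule convex_connected[OF convex_halfspace_Re_gt])
    show "complex_of_real ` {0<..} \<subseteq> ?H" by auto
    show "1 \<in> ?H" by simp
    show "z \<in> ?H" using z by simp
    show "1 islimpt complex_of_real ` {0<..}"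
      unfolding islimpt_approachable
    proof (intro allI impI)
      fix e :: real assume e: "e > 0"
      let ?x = "complex_of_real (1 + min e 1 / 2)"
      have "?x \<in> complex_of_real ` {0<..}" using e by (intro imageI) (auto simp: min_def)
      moreover have "?x \<noteq> 1" using e by (auto simp: min_def)
      moreover have "dist ?x 1 < e" using e by (auto simp: dist_norm min_def)
      ultimately show "\<exists>x'\<in>complex_of_real ` {0<..}. x' \<noteq> 1 \<and> dist x' 1 < e" by blast
    qed
    fix u assume "u \<in> complex_of_real ` {0<..}"
    then obtain a where a: "a > 0" "u = complex_of_real a" by auto
    have "?G u = complex_of_real (sqrt (pi / a)) * exp (w ^ 2 / (4 * complex_of_real a))"
      using gk_real_hb[OF a(1), of w] a(2) by (simp add: has_bochner_integral_iff)
    moreover have "csqrt (complex_of_real pi / u) = complex_of_real (sqrt (pi / a))"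
    proof -
      have "complex_of_real pi / u = complex_of_real (pi / a)" using a(2) by simp
      moreover have "csqrt (complex_of_real (pi / a)) = complex_of_real (sqrt (pi / a))"
        by (rule csqrt_of_real) (use a in simp)
      ultimately show ?thesis by simp
    qed
    ultimately show "?G u - ?R u = 0" using a by simp
  qed
  then show ?thesis using gk_integrable[OF z, of w] by (simp add: has_bochner_integral_iff)
qed

lemma has_bochner_lborel_prod:
  fixes f :: "'a::euclidean_space \<Rightarrow> real \<Rightarrow> complex"
  assumes f: "\<And>b. b \<in> Basis \<Longrightarrow> has_bochner_integral lborel (f b) (I b)"
  shows "has_bochner_integral lborel (\<lambda>x::'a. \<Prod>b\<in>Basis. f b (x \<bullet> b)) (\<Prod>b\<in>Basis. I b)"
proof -
  interpret product_sigma_finite "\<lambda>_::'a. lborel :: real measure"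
    by standard
  have int: "\<And>b. b \<in> Basis \<Longrightarrow> integrable lborel (f b)" and val: "\<And>b. b \<in> Basis \<Longrightarrow> integral\<^sup>L lborel (f b) = I b"
    using f by (auto simp: has_bochner_integral_iff)
  have meas[measurable]: "\<And>b. b \<in> Basis \<Longrightarrow> f b \<in> borel_measurable borel"
    using int by (auto dest: borel_measurable_integrable)
  have e: "(\<Sum>c\<in>Basis. g c *\<^sub>R c) \<bullet> b = g b" if "b \<in> Basis" for g :: "'a \<Rightarrow> real" and b
    using that by (simp add: inner_sum_left inner_Basis if_distrib sum.delta cong: if_cong)
  have "has_bochner_integral (\<Pi>\<^sub>M b\<in>Basis. lborel) (\<lambda>g. \<Prod>b\<in>Basis. f b (g b)) (\<Prod>b\<in>Basis. I b)"
    using product_integrable_prod[of Basis f] product_integral_prod[of Basis f] int val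
    by (simp add: has_bochner_integral_iff)
  then have "has_bochner_integral (\<Pi>\<^sub>M b\<in>Basis. lborel) (\<lambda>g. \<Prod>b\<in>Basis. f b ((\<Sum>c\<in>Basis. g c *\<^sub>R c) \<bullet> b)) (\<Prod>b\<in>Basis. I b)"
    by (simp add: e cong: prod.cong)
  then have "has_bochner_integral (distr (\<Pi>\<^sub>M b\<in>Basis. lborel) borel (\<lambda>g. \<Sum>c\<in>Basis. g c *\<^sub>R c)) (\<lambda>x::'a. \<Prod>b\<in>Basis. f b (x \<bullet> b)) (\<Prod>b\<in>Basis. I b)"
    by (intro has_bochner_integral_distr) measurable
  then show ?thesis by (simp add: lborel_eq[symmetric])
qed

lemma ngauss:
  fixes u :: "'a::euclidean_space"
  assumes z: "Re z > 0"
  shows "has_bochner_integral lborel (\<lambda>x::'a. exp (- (z * complex_of_real (x \<bullet> x)) + c * complex_of_real (x \<bullet> u)))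
           (csqrt (complex_of_real pi / z) ^ DIM('a) * exp (c ^ 2 * complex_of_real (u \<bullet> u) / (4 * z)))"
proof -
  have h: "has_bochner_integral lborel (\<lambda>x::'a. \<Prod>b\<in>Basis. gk z (c * complex_of_real (u \<bullet> b)) (x \<bullet> b))
      (\<Prod>b\<in>Basis. csqrt (complex_of_real pi / z) * exp ((c * complex_of_real (u \<bullet> b)) ^ 2 / (4 * z)))"
    by (rule has_bochner_lborel_prod) (rule gk_complex[OF z])
  have e1: "(\<Prod>b\<in>Basis. gk z (c * complex_of_real (u \<bullet> b)) (x \<bullet> b)) = exp (- (z * complex_of_real (x \<bullet> x)) + c * complex_of_real (x \<bullet> u))" for x :: 'a
  proof -
    have "(\<Prod>b\<in>Basis. gk z (c * complex_of_real (u \<bullet> b)) (x \<bullet> b))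
        = exp (\<Sum>b\<in>Basis. - (z * complex_of_real (x \<bullet> b) ^ 2) + c * complex_of_real (u \<bullet> b) * complex_of_real (x \<bullet> b))"
      by (simp add: gk_def exp_sum)
    also have "(\<Sum>b\<in>Basis. - (z * complex_of_real (x \<bullet> b) ^ 2) + c * complex_of_real (u \<bullet> b) * complex_of_real (x \<bullet> b))
        = - (z * complex_of_real (x \<bullet> x)) + c * complex_of_real (x \<bullet> u)"
      by (simp add: sum.distrib sum_negf sum_distrib_left[symmetric] euclidean_inner[of x x] euclidean_inner[of x u]
          power2_eq_square mult_ac)
        (simp add: sum_subtractf sum_distrib_left)
    finally show ?thesis .
  qed
  have e2: "(\<Prod>b\<in>Basis. csqrt (complex_of_real pi / z) * exp ((c * complex_of_real (u \<bullet> b)) ^ 2 / (4 * z)))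
      = csqrt (complex_of_real pi / z) ^ DIM('a) * exp (c ^ 2 * complex_of_real (u \<bullet> u) / (4 * z))"
  proof -
    have "(\<Prod>b\<in>Basis. csqrt (complex_of_real pi / z) * exp ((c * complex_of_real (u \<bullet> b)) ^ 2 / (4 * z)))
       = csqrt (complex_of_real pi / z) ^ DIM('a) * exp (\<Sum>b\<in>Basis. (c * complex_of_real (u \<bullet> b)) ^ 2 / (4 * z))"
      by (simp add: prod.distrib exp_sum)
    also have "(\<Sum>b\<in>Basis. (c * complex_of_real (u \<bullet> b)) ^ 2 / (4 * z)) = c ^ 2 * complex_of_real (u \<bullet> u) / (4 * z)"
      by (simp add: sum_divide_distrib[symmetric] sum_distrib_left[symmetric] euclidean_inner[of u u] power_mult_distrib power2_eq_square)
        (simp add: sum_distrib_left mult_ac)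
    finally show ?thesis .
  qed
  show ?thesis using h unfolding e1 e2 .
qed

lemma ngauss_real:
  fixes a :: real
  assumes a: "a > 0"
  shows "has_bochner_integral lborel (\<lambda>x::'a::euclidean_space. exp (- a * (x \<bullet> x))) (sqrt (pi / a) ^ DIM('a))"
proof -
  have h: "has_bochner_integral lborel (\<lambda>x::'a. exp (- (complex_of_real a * complex_of_real (x \<bullet> x)) + 0 * complex_of_real (x \<bullet> 0)))
           (csqrt (complex_of_real pi / complex_of_real a) ^ DIM('a) * exp (0 ^ 2 * complex_of_real ((0::'a) \<bullet> 0) / (4 * complex_of_real a)))"
    by (rule ngauss[where z="complex_of_real a" and c=0 and u="0::'a"]) (use a in simp)
  have e1: "exp (- (complex_of_real a * complex_of_real (x \<bullet> x)) + 0 * complex_of_real (x \<bullet> 0)) = complex_of_real (exp (- a * (x \<bullet> x)))" for x :: 'a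
    by (simp add: exp_of_real[symmetric])
  have e2: "csqrt (complex_of_real pi / complex_of_real a) = complex_of_real (sqrt (pi / a))"
  proof -
    have "complex_of_real pi / complex_of_real a = complex_of_real (pi / a)" by simp
    moreover have "csqrt (complex_of_real (pi / a)) = complex_of_real (sqrt (pi / a))"
      by (rule csqrt_of_real) (use a in simp)
    ultimately show ?thesis by simp
  qed
  have "has_bochner_integral lborel (\<lambda>x::'a. complex_of_real (exp (- a * (x \<bullet> x)))) (complex_of_real (sqrt (pi / a) ^ DIM('a)))"
    using h unfolding e1 e2 by simp
  then show ?thesis
    by (simp add: has_bochner_integral_iff complex_of_real_integrable_eq of_real_power[symmetric] del: of_real_power)
qed

lemma Lp_gauss:
  fixes h :: "'a::euclidean_space \<Rightarrow> complex"
  assumes hn: "\<And>x. norm (h x) = A * exp (- a * (x \<bullet> x))" and A: "A \<ge> 0" and a: "a > 0" and p: "p > 0"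
  shows "Lp_norm (ereal p) h = ennreal (A * (pi / (p * a)) powr (DIM('a) / (2 * p)))"
proof -
  define S where "S = sqrt (pi / (p * a))"
  have pa: "p * a > 0" using a p by simp
  have pw: "norm (h x) powr p = A powr p * exp (- (p * a) * (x \<bullet> x))" for x
    by (simp add: hn powr_mult exp_powr_real mult_ac)
  have hb: "has_bochner_integral lborel (\<lambda>x::'a. A powr p * exp (- (p * a) * (x \<bullet> x))) (A powr p * S ^ DIM('a))"
    unfolding S_def by (rule has_bochner_integral_mult_right) (rule ngauss_real[OF pa])
  have I: "(\<integral>\<^sup>+ x. ennreal (norm (h x) powr p) \<partial>lborel) = ennreal (A powr p * S ^ DIM('a))"
    unfolding pw using hb
    by (subst nn_integral_eq_integral) (auto simp: has_bochner_integral_iff)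
  have S0: "S \<ge> 0" unfolding S_def using pa by simp
  have v: "(A powr p * S ^ DIM('a)) powr (1 / p) = A * (pi / (p * a)) powr (DIM('a) / (2 * p))"
  proof -
    have "S ^ DIM('a) = (pi / (p * a)) powr (DIM('a) / 2)"
    proof -
      have "S = (pi / (p * a)) powr (1/2)" unfolding S_def using pa by (simp add: powr_half_sqrt)
      then have "S ^ DIM('a) = ((pi / (p * a)) powr (1/2)) powr (real DIM('a))"
        using S0 by (simp add: powr_realpow')
      then show ?thesis by (simp add: powr_powr)
    qed
    then have "(A powr p * S ^ DIM('a)) powr (1 / p) = (A powr p) powr (1/p) * ((pi / (p * a)) powr (DIM('a) / 2)) powr (1/p)"
      by (simp add: powr_mult)
    also have "\<dots> = A * (pi / (p * a)) powr (DIM('a) / (2 * p))"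
      using p A by (simp add: powr_powr)
    finally show ?thesis .
  qed
  have nn: "A powr p * S ^ DIM('a) \<ge> 0" using S0 by simp
  show ?thesis
    unfolding Lp_norm_def using I v p nn by (simp add: Let_def)
qed

lemma Lp_inf_le1:
  fixes h :: "'a::euclidean_space \<Rightarrow> complex"
  assumes "h \<in> borel_measurable borel" and "\<And>x. norm (h x) \<le> 1"
  shows "Lp_norm \<infinity> h \<le> 1"
  unfolding Lp_norm_def using assms by (auto intro: esssup_I)

inductive_set polys :: "('a::euclidean_space \<Rightarrow> complex) set" where
  pconst: "(\<lambda>x. c) \<in> polys"
| plin: "(\<lambda>x. complex_of_real (x \<bullet> v)) \<in> polys"
| padd: "P \<in> polys \<Longrightarrow> Q \<in> polys \<Longrightarrow> (\<lambda>x. P x + Q x) \<in> polys"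
| pmult: "P \<in> polys \<Longrightarrow> Q \<in> polys \<Longrightarrow> (\<lambda>x. P x * Q x) \<in> polys"

lemma poly_deriv:
  assumes "P \<in> polys"
  shows "\<exists>D. (\<forall>x. (P has_derivative D x) (at x)) \<and> (\<forall>v. (\<lambda>x. D x v) \<in> polys)"
  using assms
proof induction
  case (pconst c)
  show ?case
    by (rule exI[of _ "\<lambda>x h. 0"]) (auto intro: polys.pconst)
next
  case (plin v)
  show ?case
    by (rule exI[of _ "\<lambda>x h. complex_of_real (h \<bullet> v)"]) (auto intro!: derivative_eq_intros polys.pconst)
next
  case (padd P Q)
  then obtain DP DQ where P: "\<forall>x. (P has_derivative DP x) (at x)" "\<forall>v. (\<lambda>x. DP x v) \<in> polys"
    and Q: "\<forall>x. (Q has_derivative DQ x) (at x)" "\<forall>v. (\<lambda>x. DQ x v) \<in> polys" by blast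
  show ?case
    by (rule exI[of _ "\<lambda>x h. DP x h + DQ x h"]) (use P Q in \<open>auto intro!: has_derivative_add polys.padd\<close>)
next
  case (pmult P Q)
  then obtain DP DQ where P: "\<forall>x. (P has_derivative DP x) (at x)" "\<forall>v. (\<lambda>x. DP x v) \<in> polys"
    and Q: "\<forall>x. (Q has_derivative DQ x) (at x)" "\<forall>v. (\<lambda>x. DQ x v) \<in> polys" by blast
  show ?case
    by (rule exI[of _ "\<lambda>x h. P x * DQ x h + DP x h * Q x"])
       (use P Q pmult.hyps in \<open>auto intro!: has_derivative_mult polys.padd polys.pmult\<close>)
qed

lemma poly_bound:
  assumes "P \<in> polys"
  shows "\<exists>C d. C \<ge> 0 \<and> (\<forall>x. norm (P x) \<le> C * (1 + norm x) ^ d)"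
  using assms
proof induction
  case (pconst c)
  show ?case by (rule exI[of _ "norm c"], rule exI[of _ 0]) simp
next
  case (plin v)
  show ?case
  proof (rule exI[of _ "norm v"], rule exI[of _ 1], intro conjI allI)
    fix x :: 'a
    have "norm (complex_of_real (x \<bullet> v)) \<le> norm x * norm v"
      using Cauchy_Schwarz_ineq2[of x v] by simp
    also have "\<dots> \<le> norm v * (1 + norm x) ^ 1" by (simp add: mult_left_mono algebra_simps)
    finally show "norm (complex_of_real (x \<bullet> v)) \<le> norm v * (1 + norm x) ^ 1" .
  qed simp
next
  case (padd P Q)
  then obtain C1 d1 C2 d2 where P: "C1 \<ge> 0" "\<And>x. norm (P x) \<le> C1 * (1 + norm x) ^ d1"
    and Q: "C2 \<ge> 0" "\<And>x. norm (Q x) \<le> C2 * (1 + norm x) ^ d2" by blast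
  show ?case
  proof (rule exI[of _ "C1 + C2"], rule exI[of _ "d1 + d2"], intro conjI allI)
    fix x :: 'a
    have m1: "(1 + norm x) ^ d1 \<le> (1 + norm x) ^ (d1 + d2)" by (rule power_increasing) auto
    have m2: "(1 + norm x) ^ d2 \<le> (1 + norm x) ^ (d1 + d2)" by (rule power_increasing) auto
    have "norm (P x + Q x) \<le> C1 * (1 + norm x) ^ d1 + C2 * (1 + norm x) ^ d2"
      using norm_triangle_ineq[of "P x" "Q x"] P(2)[of x] Q(2)[of x] by linarith
    also have "\<dots> \<le> C1 * (1 + norm x) ^ (d1 + d2) + C2 * (1 + norm x) ^ (d1 + d2)"
      using m1 m2 P(1) Q(1) by (intro add_mono mult_left_mono) auto
    finally show "norm (P x + Q x) \<le> (C1 + C2) * (1 + norm x) ^ (d1 + d2)" by (simp add: algebra_simps)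
  qed (use P Q in simp)
next
  case (pmult P Q)
  then obtain C1 d1 C2 d2 where P: "C1 \<ge> 0" "\<And>x. norm (P x) \<le> C1 * (1 + norm x) ^ d1"
    and Q: "C2 \<ge> 0" "\<And>x. norm (Q x) \<le> C2 * (1 + norm x) ^ d2" by blast
  show ?case
  proof (rule exI[of _ "C1 * C2"], rule exI[of _ "d1 + d2"], intro conjI allI)
    fix x :: 'a
    have "norm (P x * Q x) \<le> (C1 * (1 + norm x) ^ d1) * (C2 * (1 + norm x) ^ d2)"
      unfolding norm_mult using P Q by (intro mult_mono) auto
    then show "norm (P x * Q x) \<le> C1 * C2 * (1 + norm x) ^ (d1 + d2)" by (simp add: power_add mult_ac)
  qed (use P Q in simp)
qed

lemma poly_gauss_bounded:
  fixes a :: real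
  assumes a: "a > 0"
  shows "\<exists>B. \<forall>s\<ge>0. (1 + s) ^ m * exp (- a * s\<^sup>2) \<le> B"
proof -
  have "((\<lambda>s. (1 + s) ^ m * exp (- a * s\<^sup>2)) \<longlongrightarrow> 0) at_top"
    using a by real_asymp
  then have "eventually (\<lambda>s. (1 + s) ^ m * exp (- a * s\<^sup>2) < 1) at_top"
    by (rule order_tendstoD) simp
  then obtain S where S: "\<And>s. s \<ge> S \<Longrightarrow> (1 + s) ^ m * exp (- a * s\<^sup>2) < 1"
    by (auto simp: eventually_at_top_linorder)
  have "compact ((\<lambda>s. (1 + s) ^ m * exp (- a * s\<^sup>2)) ` {0..S})"
    by (intro compact_continuous_image continuous_intros) auto
  then obtain B1 where B1: "\<And>y. y \<in> (\<lambda>s. (1 + s) ^ m * exp (- a * s\<^sup>2)) ` {0..S} \<Longrightarrow> norm y \<le> B1"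
    by (meson bounded_iff compact_imp_bounded)
  show ?thesis
  proof (rule exI[of _ "max 1 B1"], intro allI impI)
    fix s :: real assume s: "s \<ge> 0"
    show "(1 + s) ^ m * exp (- a * s\<^sup>2) \<le> max 1 B1"
    proof (cases "s \<ge> S")
      case True then show ?thesis using S[of s] by simp
    next
      case False
      then have "norm ((1 + s) ^ m * exp (- a * s\<^sup>2)) \<le> B1" using s by (intro B1) auto
      then show ?thesis by simp
    qed
  qed
qed

lemma g1: "((\<lambda>x::'a::euclidean_space. - (z * complex_of_real (x \<bullet> x))) has_derivative (\<lambda>h. (- 2 * z) * complex_of_real (x \<bullet> h))) (at x)"
  apply (rule has_derivative_eq_rhs)
   apply (rule derivative_intros)+
  apply (auto simp: fun_eq_iff inner_commute algebra_simps)
  done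
lemma gauss_has_derivative:
  "((\<lambda>x::'a::euclidean_space. exp (- (z * complex_of_real (x \<bullet> x)))) has_derivative
     (\<lambda>h. exp (- (z * complex_of_real (x \<bullet> x))) * ((- 2 * z) * complex_of_real (x \<bullet> h)))) (at x)"
proof -
  have e: "(exp has_derivative (*) (exp y)) (at y)" for y :: complex
    using DERIV_exp[of y] by (simp add: has_field_derivative_def)
  show ?thesis
    using has_derivative_compose[OF g1 e] by (simp add: mult_ac)
qed

lemma deriv_seq_form:
  fixes z :: complex
  assumes "P \<in> polys"
  shows "\<exists>Q\<in>polys. deriv_seq vs (\<lambda>x::'a::euclidean_space. P x * exp (- (z * complex_of_real (x \<bullet> x))))
            = (\<lambda>x. Q x * exp (- (z * complex_of_real (x \<bullet> x))))"
proof (induction vs)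
  case Nil
  then show ?case using assms by auto
next
  case (Cons v vs)
  then obtain Q where Q: "Q \<in> polys" and eq: "deriv_seq vs (\<lambda>x::'a. P x * exp (- (z * complex_of_real (x \<bullet> x))))
            = (\<lambda>x. Q x * exp (- (z * complex_of_real (x \<bullet> x))))" by blast
  obtain DQ where DQ: "\<forall>x. (Q has_derivative DQ x) (at x)" "\<forall>v. (\<lambda>x. DQ x v) \<in> polys"
    using poly_deriv[OF Q] by blast
  have hd: "((\<lambda>x. Q x * exp (- (z * complex_of_real (x \<bullet> x)))) has_derivative
      (\<lambda>h. Q x * (exp (- (z * complex_of_real (x \<bullet> x))) * ((- 2 * z) * complex_of_real (x \<bullet> h))) + DQ x h * exp (- (z * complex_of_real (x \<bullet> x))))) (at x)" for x
    by (rule has_derivative_mult[OF _ gauss_has_derivative]) (use DQ in auto)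
  define Q' where "Q' = (\<lambda>x. Q x * ((\<lambda>x. - 2 * z) x * complex_of_real (x \<bullet> v)) + DQ x v)"
  have Q': "Q' \<in> polys" unfolding Q'_def
    by (rule polys.padd[OF polys.pmult[OF Q polys.pmult[OF polys.pconst polys.plin]]]) (use DQ in blast)
  have "deriv_seq (v # vs) (\<lambda>x::'a. P x * exp (- (z * complex_of_real (x \<bullet> x))))
      = (\<lambda>x. Q' x * exp (- (z * complex_of_real (x \<bullet> x))))"
  proof
    fix x :: 'a
    have "deriv_seq (v # vs) (\<lambda>x::'a. P x * exp (- (z * complex_of_real (x \<bullet> x)))) x
        = frechet_derivative (\<lambda>x. Q x * exp (- (z * complex_of_real (x \<bullet> x)))) (at x) v"
      by (simp add: eq)
    also have "\<dots> = Q x * (exp (- (z * complex_of_real (x \<bullet> x))) * ((- 2 * z) * complex_of_real (x \<bullet> v))) + DQ x v * exp (- (z * complex_of_real (x \<bullet> x)))"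
    proof -
      have fd: "frechet_derivative (\<lambda>x. Q x * exp (- (z * complex_of_real (x \<bullet> x)))) (at x) =
        (\<lambda>h. Q x * (exp (- (z * complex_of_real (x \<bullet> x))) * ((- 2 * z) * complex_of_real (x \<bullet> h))) + DQ x h * exp (- (z * complex_of_real (x \<bullet> x))))"
        by (rule frechet_derivative_at[OF hd[of x], symmetric])
      show ?thesis by (simp only: fd)
    qed
    also have "\<dots> = Q' x * exp (- (z * complex_of_real (x \<bullet> x)))"
      by (simp add: Q'_def algebra_simps)
    finally show "deriv_seq (v # vs) (\<lambda>x::'a. P x * exp (- (z * complex_of_real (x \<bullet> x)))) x = Q' x * exp (- (z * complex_of_real (x \<bullet> x)))" .
  qed
  then show ?case using Q' by blast
qed

lemma schwartz_gauss:
  fixes z :: complex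
  assumes z: "Re z > 0"
  shows "schwartz (\<lambda>x::'a::euclidean_space. exp (- (z * complex_of_real (x \<bullet> x))))"
  unfolding schwartz_def
proof (intro allI impI conjI)
  fix vs :: "'a list" and x :: 'a and k :: nat
  obtain Q where Q: "Q \<in> polys" and eq: "deriv_seq vs (\<lambda>x::'a. (\<lambda>x. 1) x * exp (- (z * complex_of_real (x \<bullet> x))))
            = (\<lambda>x. Q x * exp (- (z * complex_of_real (x \<bullet> x))))"
    using deriv_seq_form[OF polys.pconst[of 1], of vs z] by blast
  then have eq': "deriv_seq vs (\<lambda>x::'a. exp (- (z * complex_of_real (x \<bullet> x)))) = (\<lambda>x. Q x * exp (- (z * complex_of_real (x \<bullet> x))))"
    by simp
  obtain DQ where DQ: "\<forall>x. (Q has_derivative DQ x) (at x)"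
    using poly_deriv[OF Q] by blast
  show "deriv_seq vs (\<lambda>x::'a. exp (- (z * complex_of_real (x \<bullet> x)))) differentiable at x"
    unfolding eq' differentiable_def
    by (rule exI, rule has_derivative_mult[OF _ gauss_has_derivative]) (use DQ in auto)
  obtain C d where C: "C \<ge> 0" "\<And>x. norm (Q x) \<le> C * (1 + norm x) ^ d"
    using poly_bound[OF Q] by blast
  obtain B where B: "\<And>s. s \<ge> 0 \<Longrightarrow> (1 + s) ^ (k + d) * exp (- Re z * s\<^sup>2) \<le> B"
    using poly_gauss_bounded[OF z, of "k + d"] by auto
  show "bounded (range (\<lambda>x. norm x ^ k * norm (deriv_seq vs (\<lambda>x::'a. exp (- (z * complex_of_real (x \<bullet> x)))) x)))"
    unfolding bounded_iff
  proof (intro exI[of _ "C * B"] ballI)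
    fix y assume "y \<in> range (\<lambda>x. norm x ^ k * norm (deriv_seq vs (\<lambda>x::'a. exp (- (z * complex_of_real (x \<bullet> x)))) x))"
    then obtain x :: 'a where y: "y = norm x ^ k * norm (Q x * exp (- (z * complex_of_real (x \<bullet> x))))"
      unfolding eq' by auto
    have ne: "norm (exp (- (z * complex_of_real (x \<bullet> x)))) = exp (- Re z * (norm x)\<^sup>2)"
      by (simp add: norm_exp_eq_Re dot_square_norm)
    have "norm x ^ k \<le> (1 + norm x) ^ k" by (rule power_mono) auto
    moreover have "norm (Q x) * exp (- Re z * (norm x)\<^sup>2) \<le> C * (1 + norm x) ^ d * exp (- Re z * (norm x)\<^sup>2)"
      using C(2)[of x] by (rule mult_right_mono) simp
    ultimately have "y \<le> (1 + norm x) ^ k * (C * (1 + norm x) ^ d * exp (- Re z * (norm x)\<^sup>2))"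
      unfolding y norm_mult ne by (rule mult_mono) auto
    also have "\<dots> = C * ((1 + norm x) ^ (k + d) * exp (- Re z * (norm x)\<^sup>2))"
      by (simp add: power_add mult_ac)
    also have "\<dots> \<le> C * B" using B[of "norm x"] C(1) by (intro mult_left_mono) auto
    finally have "y \<le> C * B" .
    moreover have "y \<ge> 0" unfolding y by simp
    ultimately show "norm y \<le> C * B" by simp
  qed
qed

definition SS :: "complex \<Rightarrow> complex" where "SS w = csqrt (complex_of_real pi / w)"
definition EG :: "complex \<Rightarrow> 'a::euclidean_space \<Rightarrow> complex" where "EG z x = exp (- (z * complex_of_real (x \<bullet> x)))"

lemma FT_gauss:
  fixes \<xi> :: "'a::euclidean_space"
  assumes z: "Re z > 0"
  shows "fourier (EG z) \<xi> = SS z ^ DIM('a) * EG (complex_of_real (pi^2) / z) \<xi>"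
proof -
  have h: "has_bochner_integral lborel (\<lambda>x::'a. exp (- (z * complex_of_real (x \<bullet> x)) + (- (2 * complex_of_real pi * \<i>)) * complex_of_real (x \<bullet> \<xi>)))
      (csqrt (complex_of_real pi / z) ^ DIM('a) * exp ((- (2 * complex_of_real pi * \<i>)) ^ 2 * complex_of_real (\<xi> \<bullet> \<xi>) / (4 * z)))"
    by (rule ngauss[OF z])
  have e1: "EG z x * cis (- 2 * pi * (x \<bullet> \<xi>)) = exp (- (z * complex_of_real (x \<bullet> x)) + (- (2 * complex_of_real pi * \<i>)) * complex_of_real (x \<bullet> \<xi>))" for x :: 'a
    by (simp add: EG_def cis_conv_exp exp_add[symmetric] algebra_simps)
  have e2: "(- (2 * complex_of_real pi * \<i>)) ^ 2 * complex_of_real (\<xi> \<bullet> \<xi>) / (4 * z) = - (complex_of_real (pi^2) / z * complex_of_real (\<xi> \<bullet> \<xi>))"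
    by (simp add: power2_eq_square field_simps)
  show ?thesis
    unfolding fourier_def e1 unfolding SS_def EG_def by (rule has_bochner_integral_integral_eq[OF h[unfolded e2]])
qed

lemma Re_div_pos: "Re z > 0 \<Longrightarrow> r > 0 \<Longrightarrow> Re (complex_of_real r / z) > 0"
proof -
  assume a: "Re z > 0" "r > 0"
  have "(Re z)\<^sup>2 + (Im z)\<^sup>2 > 0" using a by (simp add: add_pos_nonneg)
  then show ?thesis using a by (simp add: Re_divide)
qed

lemma inner_step:
  fixes x \<xi> :: "'a::euclidean_space"
  assumes w2: "Re w2 > 0"
  shows "has_bochner_integral lborel
    (\<lambda>\<eta>. F * (K2 * EG w2 \<eta>) * cis (\<xi> \<bullet> \<eta>) * cis (2 * pi * (x \<bullet> (\<xi> + \<eta>))))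
    (F * cis (2 * pi * (x \<bullet> \<xi>)) * K2 * (SS w2 ^ DIM('a) * exp (\<i> ^ 2 * complex_of_real ((\<xi> + (2 * pi) *\<^sub>R x) \<bullet> (\<xi> + (2 * pi) *\<^sub>R x)) / (4 * w2))))"
proof -
  have h: "has_bochner_integral lborel (\<lambda>\<eta>::'a. exp (- (w2 * complex_of_real (\<eta> \<bullet> \<eta>)) + \<i> * complex_of_real (\<eta> \<bullet> (\<xi> + (2 * pi) *\<^sub>R x))))
      (SS w2 ^ DIM('a) * exp (\<i> ^ 2 * complex_of_real ((\<xi> + (2 * pi) *\<^sub>R x) \<bullet> (\<xi> + (2 * pi) *\<^sub>R x)) / (4 * w2)))"
    unfolding SS_def by (rule ngauss[OF w2])
  have e: "F * (K2 * EG w2 \<eta>) * cis (\<xi> \<bullet> \<eta>) * cis (2 * pi * (x \<bullet> (\<xi> + \<eta>)))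
      = (F * cis (2 * pi * (x \<bullet> \<xi>)) * K2) * (exp (- (w2 * complex_of_real (\<eta> \<bullet> \<eta>))) * exp (\<i> * complex_of_real (\<eta> \<bullet> (\<xi> + (2 * pi) *\<^sub>R x))))" for \<eta> :: 'a
  proof -
    have i1: "\<eta> \<bullet> (\<xi> + (2 * pi) *\<^sub>R x) = \<xi> \<bullet> \<eta> + 2 * pi * (x \<bullet> \<eta>)"
      by (simp add: inner_add_right inner_commute)
    have i2: "2 * pi * (x \<bullet> (\<xi> + \<eta>)) = 2 * pi * (x \<bullet> \<xi>) + 2 * pi * (x \<bullet> \<eta>)"
      by (simp add: inner_add_right algebra_simps)
    show ?thesis
      unfolding i1 i2 EG_def cis_conv_exp
      by (simp add: exp_add distrib_left mult_ac)
  qed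
  show ?thesis unfolding e by (rule has_bochner_integral_mult_right[OF h[unfolded exp_add]])
qed

lemma bilin_gauss:
  fixes x :: "'a::euclidean_space"
  assumes z1: "Re z1 > 0" and z2: "Re z2 > 0"
  defines "w1 \<equiv> complex_of_real (pi^2) / z1" and "w2 \<equiv> complex_of_real (pi^2) / z2"
  defines "Z \<equiv> w1 + 1 / (4 * w2)" and "c \<equiv> 2 * complex_of_real pi * \<i> - complex_of_real pi / w2"
  shows "bilin_mult (\<lambda>\<xi> \<eta>. cis (\<xi> \<bullet> \<eta>)) (EG z1) (EG z2) x
       = SS z1 ^ DIM('a) * SS z2 ^ DIM('a) * SS w2 ^ DIM('a) * SS Z ^ DIM('a) *
         EG (complex_of_real (pi^2) / w2 - c ^ 2 / (4 * Z)) x"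
proof -
  let ?n = "DIM('a)"
  have w1p: "Re w1 > 0" unfolding w1_def by (rule Re_div_pos[OF z1]) simp
  have w2p: "Re w2 > 0" unfolding w2_def by (rule Re_div_pos[OF z2]) simp
  have w2nz: "w2 \<noteq> 0" using w2p by auto
  have q: "1 / (4 * w2) = complex_of_real (1/4) / w2" by (simp add: field_simps)
  have Zp: "Re Z > 0" unfolding Z_def q using w1p Re_div_pos[OF w2p, of "1/4"] by simp
  define K0 where "K0 = SS z1 ^ ?n * SS z2 ^ ?n * SS w2 ^ ?n * exp (- (complex_of_real (pi^2) / w2 * complex_of_real (x \<bullet> x)))"
  define inner where "inner = (\<lambda>\<xi>::'a. (SS z1 ^ ?n * EG w1 \<xi>) * cis (2 * pi * (x \<bullet> \<xi>)) * SS z2 ^ ?n *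
      (SS w2 ^ ?n * exp (\<i> ^ 2 * complex_of_real ((\<xi> + (2 * pi) *\<^sub>R x) \<bullet> (\<xi> + (2 * pi) *\<^sub>R x)) / (4 * w2))))"
  have step1: "(LINT \<eta>|lborel. fourier (EG z1) \<xi> * fourier (EG z2) \<eta> * cis (\<xi> \<bullet> \<eta>) * cis (2 * pi * (x \<bullet> (\<xi> + \<eta>)))) = inner \<xi>" for \<xi>
  proof -
    have "(LINT \<eta>|lborel. fourier (EG z1) \<xi> * fourier (EG z2) \<eta> * cis (\<xi> \<bullet> \<eta>) * cis (2 * pi * (x \<bullet> (\<xi> + \<eta>))))
        = (LINT \<eta>|lborel. (SS z1 ^ ?n * EG w1 \<xi>) * (SS z2 ^ ?n * EG w2 \<eta>) * cis (\<xi> \<bullet> \<eta>) * cis (2 * pi * (x \<bullet> (\<xi> + \<eta>))))"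
      unfolding FT_gauss[OF z1] FT_gauss[OF z2] w1_def w2_def ..
    also have "\<dots> = inner \<xi>"
      unfolding inner_def by (rule has_bochner_integral_integral_eq[OF inner_step[OF w2p]])
    finally show ?thesis .
  qed
  have step2: "inner \<xi> = K0 * exp (- (Z * complex_of_real (\<xi> \<bullet> \<xi>)) + c * complex_of_real (\<xi> \<bullet> x))" for \<xi> :: 'a
  proof -
    have uu: "(\<xi> + (2 * pi) *\<^sub>R x) \<bullet> (\<xi> + (2 * pi) *\<^sub>R x) = \<xi> \<bullet> \<xi> + 4 * pi * (\<xi> \<bullet> x) + 4 * pi^2 * (x \<bullet> x)"
      by (simp add: inner_add_left inner_add_right inner_commute power2_eq_square algebra_simps)
    have ex: "- (w1 * complex_of_real (\<xi> \<bullet> \<xi>)) + \<i> * complex_of_real (2 * pi * (x \<bullet> \<xi>))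
              + \<i> ^ 2 * complex_of_real ((\<xi> + (2 * pi) *\<^sub>R x) \<bullet> (\<xi> + (2 * pi) *\<^sub>R x)) / (4 * w2)
            = (- (Z * complex_of_real (\<xi> \<bullet> \<xi>)) + c * complex_of_real (\<xi> \<bullet> x))
              + (- (complex_of_real (pi^2) / w2 * complex_of_real (x \<bullet> x)))"
      unfolding uu Z_def c_def using w2nz
      by (simp add: field_simps inner_commute power2_eq_square)
    have "inner \<xi> = SS z1 ^ ?n * SS z2 ^ ?n * SS w2 ^ ?n *
        exp (- (w1 * complex_of_real (\<xi> \<bullet> \<xi>)) + \<i> * complex_of_real (2 * pi * (x \<bullet> \<xi>))
              + \<i> ^ 2 * complex_of_real ((\<xi> + (2 * pi) *\<^sub>R x) \<bullet> (\<xi> + (2 * pi) *\<^sub>R x)) / (4 * w2))"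
      unfolding inner_def EG_def cis_conv_exp exp_add by (simp add: mult_ac)
    also have "\<dots> = K0 * exp (- (Z * complex_of_real (\<xi> \<bullet> \<xi>)) + c * complex_of_real (\<xi> \<bullet> x))"
      unfolding ex K0_def exp_add by (simp add: mult_ac)
    finally show ?thesis .
  qed
  have step3: "has_bochner_integral lborel (\<lambda>\<xi>::'a. K0 * exp (- (Z * complex_of_real (\<xi> \<bullet> \<xi>)) + c * complex_of_real (\<xi> \<bullet> x)))
      (K0 * (SS Z ^ ?n * exp (c ^ 2 * complex_of_real (x \<bullet> x) / (4 * Z))))"
    unfolding SS_def by (rule has_bochner_integral_mult_right[OF ngauss[OF Zp]])
  have "bilin_mult (\<lambda>\<xi> \<eta>. cis (\<xi> \<bullet> \<eta>)) (EG z1) (EG z2) x = (LINT \<xi>|lborel. inner \<xi>)"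
    unfolding bilin_mult_def step1 ..
  also have "\<dots> = K0 * (SS Z ^ ?n * exp (c ^ 2 * complex_of_real (x \<bullet> x) / (4 * Z)))"
    unfolding step2 by (rule has_bochner_integral_integral_eq[OF step3])
  also have "\<dots> = SS z1 ^ ?n * SS z2 ^ ?n * SS w2 ^ ?n * SS Z ^ ?n *
         EG (complex_of_real (pi^2) / w2 - c ^ 2 / (4 * Z)) x"
  proof -
    have "- (complex_of_real (pi^2) / w2 * complex_of_real (x \<bullet> x)) + c ^ 2 * complex_of_real (x \<bullet> x) / (4 * Z)
        = - ((complex_of_real (pi^2) / w2 - c ^ 2 / (4 * Z)) * complex_of_real (x \<bullet> x))"
      by (simp add: algebra_simps)
    then show ?thesis unfolding K0_def EG_def
      by (simp add: mult_ac exp_add[symmetric])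
  qed
  finally show ?thesis .
qed

lemma fam_basic:
  fixes t :: real
  assumes t: "0 < t"
  defines "z1 \<equiv> complex_of_real (pi^2) / (complex_of_real t - \<i> / 2)"
    and "z2 \<equiv> complex_of_real t + complex_of_real (2 * pi^2) * \<i>"
  shows "Re z1 = pi^2 * t / (t^2 + 1/4)" "Re z2 = t"
    "complex_of_real (pi^2) / z1 = complex_of_real t - \<i> / 2"
    "complex_of_real (pi^2) / z1 + 1 / (4 * (complex_of_real (pi^2) / z2)) = complex_of_real (t * (1 + 1 / (4 * pi^2)))"
    "2 * complex_of_real pi * \<i> - complex_of_real pi / (complex_of_real (pi^2) / z2) = complex_of_real (- t / pi)"
    "complex_of_real (pi^2) / (complex_of_real (pi^2) / z2) = z2"
proof -
  have d0: "complex_of_real t - \<i> / 2 \<noteq> 0" by (auto simp: complex_eq_iff)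
  have z2nz: "z2 \<noteq> 0" using t by (auto simp: z2_def complex_eq_iff)
  have pinz: "complex_of_real pi \<noteq> 0" by simp
  show "Re z1 = pi^2 * t / (t^2 + 1/4)"
    unfolding z1_def by (simp add: Re_divide power2_eq_square)
  show "Re z2 = t" unfolding z2_def by simp
  show w1: "complex_of_real (pi^2) / z1 = complex_of_real t - \<i> / 2"
    unfolding z1_def using d0 by (simp add: field_simps)
  have q: "1 / (4 * (complex_of_real (pi^2) / z2)) = z2 / (4 * complex_of_real (pi^2))"
    using z2nz by (simp add: field_simps)
  show "complex_of_real (pi^2) / z1 + 1 / (4 * (complex_of_real (pi^2) / z2)) = complex_of_real (t * (1 + 1 / (4 * pi^2)))"
    unfolding w1 q unfolding z2_def by (simp add: complex_eq_iff field_simps power2_eq_square)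
  show "2 * complex_of_real pi * \<i> - complex_of_real pi / (complex_of_real (pi^2) / z2) = complex_of_real (- t / pi)"
    using z2nz unfolding z2_def by (simp add: complex_eq_iff field_simps power2_eq_square)
  show "complex_of_real (pi^2) / (complex_of_real (pi^2) / z2) = z2"
    using z2nz by simp
qed

lemma norm_SS: "w \<noteq> 0 \<Longrightarrow> norm (SS w) = sqrt (pi / norm w)"
  unfolding SS_def by (simp add: norm_divide)

lemma fam_M:
  fixes t :: real
  assumes t: "0 < t"
  defines "z1 \<equiv> complex_of_real (pi^2) / (complex_of_real t - \<i> / 2)"
    and "z2 \<equiv> complex_of_real t + complex_of_real (2 * pi^2) * \<i>"
  defines "K \<equiv> SS z1 ^ DIM('a) * SS z2 ^ DIM('a) * SS (complex_of_real (pi^2) / z2) ^ DIM('a) *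
              SS (complex_of_real (t * (1 + 1 / (4 * pi^2)))) ^ DIM('a)"
    and "W \<equiv> z2 - complex_of_real (t / (4 * pi^2 + 1))"
  shows "bilin_mult (\<lambda>(\<xi>::'a::euclidean_space) \<eta>. cis (\<xi> \<bullet> \<eta>)) (EG z1) (EG z2) = (\<lambda>x. K * EG W x)"
    and "Re W = 4 * pi^2 * t / (4 * pi^2 + 1)"
    and "norm K \<ge> sqrt (1 / (2 * t * (1 + 1 / (4 * pi^2)))) ^ DIM('a)"
proof -
  note fb = fam_basic[OF t]
  have Rz1: "Re z1 > 0" unfolding z1_def fb(1) using t by (simp add: add_pos_pos)
  have Rz2: "Re z2 > 0" unfolding z2_def using fb(2) t by simp
  have W: "complex_of_real (pi^2) / (complex_of_real (pi^2) / z2) - (complex_of_real (- t / pi))^2 / (4 * complex_of_real (t * (1 + 1 / (4 * pi^2)))) = W"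
  proof -
    have r: "(- t / pi)^2 / (4 * (t * (1 + 1 / (4 * pi^2)))) = t / (4 * pi^2 + 1)"
    proof -
      have a1: "4 * (t * (1 + 1/(4*pi^2))) = t * (4*pi^2+1) / pi^2" by (simp add: field_simps)
      have a2: "(- t/pi)^2 = t^2/pi^2" by (simp add: power_divide)
      have p: "4*pi^2+1 > 0" by (simp add: add_pos_nonneg)
      show ?thesis unfolding a1 a2 using t p by (simp add: power2_eq_square)
    qed
    have "(complex_of_real (- t / pi))^2 / (4 * complex_of_real (t * (1 + 1 / (4 * pi^2)))) = complex_of_real (t / (4 * pi^2 + 1))"
      unfolding r[symmetric] by simp
    then show ?thesis unfolding W_def fb(6)[folded z2_def] by simp
  qed
  show "bilin_mult (\<lambda>(\<xi>::'a::euclidean_space) \<eta>. cis (\<xi> \<bullet> \<eta>)) (EG z1) (EG z2) = (\<lambda>x. K * EG W x)"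
  proof
    fix x :: 'a
    show "bilin_mult (\<lambda>(\<xi>::'a::euclidean_space) \<eta>. cis (\<xi> \<bullet> \<eta>)) (EG z1) (EG z2) x = K * EG W x"
      using bilin_gauss[OF Rz1 Rz2, of x, unfolded fb(4)[folded z1_def z2_def] fb(5)[folded z2_def] W]
      unfolding K_def .
  qed
  show "Re W = 4 * pi^2 * t / (4 * pi^2 + 1)"
  proof -
    have p: "4*pi^2+1 \<noteq> 0" by (metis add_pos_nonneg less_numeral_extra(1) order_less_irrefl zero_le_power2 mult_nonneg_nonneg zero_le_numeral add.commute)
    have "t - t / (4 * pi^2 + 1) = 4 * pi^2 * t / (4 * pi^2 + 1)" using p by (simp add: field_simps)
    then show ?thesis unfolding W_def z2_def by simp
  qed
  show "norm K \<ge> sqrt (1 / (2 * t * (1 + 1 / (4 * pi^2)))) ^ DIM('a)"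
  proof -
    have z1nz: "z1 \<noteq> 0" using Rz1 by auto
    have z2nz: "z2 \<noteq> 0" using Rz2 by auto
    have k1: "1 + 1 / (4 * pi^2) > 0" by (simp add: add_pos_pos)
    have tk: "t * (1 + 1 / (4 * pi^2)) > 0" using t k1 by simp
    have Znz: "complex_of_real (t * (1 + 1 / (4 * pi^2))) \<noteq> 0"
    proof
      assume "complex_of_real (t * (1 + 1 / (4 * pi^2))) = 0"
      then have "t * (1 + 1 / (4 * pi^2)) = 0" by (simp only: of_real_eq_0_iff)
      then show False using tk by linarith
    qed
    have nZ0: "norm (complex_of_real (t * (1 + 1 / (4 * pi^2)))) = t * (1 + 1 / (4 * pi^2))"
      using tk by (simp only: norm_of_real)
    have n12: "norm (SS z2) * norm (SS (complex_of_real (pi^2) / z2)) = 1"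
    proof -
      have a: "norm (SS z2) = sqrt (pi / norm z2)" by (rule norm_SS[OF z2nz])
      have w2nz: "complex_of_real (pi^2) / z2 \<noteq> 0" using z2nz by simp
      have nw: "norm (complex_of_real (pi^2) / z2) = pi^2 / norm z2" by (simp add: norm_divide norm_power)
      have b: "norm (SS (complex_of_real (pi^2) / z2)) = sqrt (pi / (pi^2 / norm z2))" unfolding norm_SS[OF w2nz] nw ..
      have c: "(pi / norm z2) * (pi / (pi^2 / norm z2)) = 1" using z2nz by (simp add: field_simps power2_eq_square)
      show ?thesis unfolding a b real_sqrt_mult[symmetric] c by simp
    qed
    have n1: "norm (SS z1) \<ge> sqrt (1 / (2 * pi))"
    proof -
      have e: "pi / norm z1 = norm (complex_of_real t - \<i> / 2) / pi"
      proof -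
        have hpi: "norm (complex_of_real (pi^2)) = pi^2" by (simp only: norm_of_real) simp
        have "norm (complex_of_real t - \<i> / 2) \<noteq> 0" by (auto simp: complex_eq_iff)
        then show ?thesis unfolding z1_def norm_divide hpi by (simp add: field_simps power2_eq_square)
      qed
      have "1/2 \<le> norm (complex_of_real t - \<i> / 2)"
        using abs_Im_le_cmod[of "complex_of_real t - \<i> / 2"] by simp
      then have "1 / (2 * pi) \<le> pi / norm z1" unfolding e by (simp add: field_simps)
      then show ?thesis using z1nz by (simp add: norm_SS)
    qed
    have nZ: "norm (SS (complex_of_real (t * (1 + 1 / (4 * pi^2))))) = sqrt (pi / (t * (1 + 1 / (4 * pi^2))))"
      unfolding norm_SS[OF Znz] nZ0 ..
    have "norm K = (norm (SS z1) * (norm (SS z2) * norm (SS (complex_of_real (pi^2) / z2))) * norm (SS (complex_of_real (t * (1 + 1 / (4 * pi^2)))))) ^ DIM('a)"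
      unfolding K_def by (simp add: norm_mult norm_power power_mult_distrib mult_ac)
    also have "\<dots> = (norm (SS z1) * sqrt (pi / (t * (1 + 1 / (4 * pi^2))))) ^ DIM('a)"
      unfolding n12 nZ by simp
    finally have nK: "norm K = (norm (SS z1) * sqrt (pi / (t * (1 + 1 / (4 * pi^2))))) ^ DIM('a)" .
    have "sqrt (1 / (2 * t * (1 + 1 / (4 * pi^2)))) = sqrt (1 / (2 * pi)) * sqrt (pi / (t * (1 + 1 / (4 * pi^2))))"
    proof -
      have gen: "1 / (2 * a) = 1 / (2 * pi) * (pi / a)" for a :: real
        by (cases "a = 0") (simp_all add: field_simps)
      show ?thesis unfolding real_sqrt_mult[symmetric] mult.assoc gen[of "t * (1 + 1 / (4 * pi^2))"] ..
    qed
    also have "\<dots> \<le> norm (SS z1) * sqrt (pi / (t * (1 + 1 / (4 * pi^2))))"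
      by (rule mult_right_mono[OF n1]) (use tk in simp)
    finally have "sqrt (1 / (2 * t * (1 + 1 / (4 * pi^2)))) \<le> norm (SS z1) * sqrt (pi / (t * (1 + 1 / (4 * pi^2))))" .
    then show ?thesis unfolding nK by (rule power_mono) (use tk in simp)
  qed
qed

lemma ereal_ge2_cases:
  fixes p :: ereal
  assumes "2 \<le> p"
  obtains "p = \<infinity>" | p0 where "p = ereal p0" "2 \<le> p0"
  using assms by (cases p) auto

lemma Lp_upper:
  fixes h :: "'a::euclidean_space \<Rightarrow> complex"
  assumes p: "2 \<le> p" and a: "a > 0" and hn: "\<And>x. norm (h x) = exp (- a * (x \<bullet> x))"
    and hm: "h \<in> borel_measurable borel" and U: "pi / (2 * a) \<le> U"
  shows "Lp_norm p h \<le> ennreal (U powr (real DIM('a) * real_of_ereal (inverse p) / 2))"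
proof -
  have U0: "U > 0" using U a by (smt (verit) divide_pos_pos pi_gt_zero)
  from p show ?thesis
  proof (cases rule: ereal_ge2_cases)
    case 1
    have "Lp_norm p h \<le> 1"
      unfolding 1 by (rule Lp_inf_le1[OF hm]) (use a in \<open>simp add: hn\<close>)
    then show ?thesis using U0 by (simp add: 1)
  next
    case (2 p0)
    have p0: "p0 > 0" using 2 by simp
    have inv: "real_of_ereal (inverse p) = 1 / p0" using 2 p0 by (simp add: inverse_eq_divide)
    have "Lp_norm p h = ennreal (1 * (pi / (p0 * a)) powr (real DIM('a) / (2 * p0)))"
      unfolding 2 by (rule Lp_gauss) (use hn a p0 in auto)
    also have "\<dots> \<le> ennreal (U powr (real DIM('a) * real_of_ereal (inverse p) / 2))"
    proof (rule ennreal_leI)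
      have "pi / (p0 * a) \<le> pi / (2 * a)" using 2 a by (intro divide_left_mono) auto
      also have "\<dots> \<le> U" by (rule U)
      finally have b: "pi / (p0 * a) \<le> U" .
      have e: "real DIM('a) / (2 * p0) = real DIM('a) * real_of_ereal (inverse p) / 2" unfolding inv by simp
      show "1 * (pi / (p0 * a)) powr (real DIM('a) / (2 * p0)) \<le> U powr (real DIM('a) * real_of_ereal (inverse p) / 2)"
        unfolding e
      proof (simp only: mult_1_left, rule powr_mono2)
        show "0 \<le> real DIM('a) * real_of_ereal (inverse p) / 2" unfolding inv using p0 by simp
        show "0 \<le> pi / (p0 * a)" using p0 a by simp
      qed (rule b)
    qed
    finally show ?thesis .
  qed
qed

lemma ereal_inv_fin:
  fixes p :: ereal
  assumes "2 \<le> p"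
  shows "inverse p = ereal (real_of_ereal (inverse p))" "0 \<le> real_of_ereal (inverse p)" "real_of_ereal (inverse p) \<le> 1/2"
  using assms by (cases rule: ereal_ge2_cases; simp add: inverse_eq_divide)+

lemma r_fin:
  fixes r :: ereal and g :: real
  assumes "inverse r = ereal g" "g > 0"
  shows "r = ereal (1 / g)"
proof (cases r)
  case (real r0)
  show ?thesis
  proof (cases "r0 = 0")
    case True then show ?thesis using assms real by simp
  next
    case False then show ?thesis using assms real by (simp add: inverse_eq_divide field_simps)
  qed
qed (use assms in auto)

theorem mainTheorem4:
  fixes p q r :: ereal
  assumes "2 \<le> p" and "2 \<le> q"
    and "inverse p + inverse q = inverse r"
    and "inverse p + inverse q \<ge> 1 / 2"
    and "p = 2 \<or> q = 2 \<or> r = 2"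
  shows "\<not> bilinear_multiplier_class p q r (\<lambda>(\<xi>::'a::euclidean_space) \<eta>. cis (\<xi> \<bullet> \<eta>))"
proof
  assume "bilinear_multiplier_class p q r (\<lambda>(\<xi>::'a::euclidean_space) \<eta>. cis (\<xi> \<bullet> \<eta>))"
  then obtain C :: real where C: "\<And>f g. schwartz f \<Longrightarrow> schwartz g \<Longrightarrow>
      Lp_norm r (bilin_mult (\<lambda>(\<xi>::'a) \<eta>. cis (\<xi> \<bullet> \<eta>)) f g) \<le> ennreal C * Lp_norm p f * Lp_norm q g"
    unfolding bilinear_multiplier_class_def by blast
  define \<alpha> where "\<alpha> = real_of_ereal (inverse p)"
  define \<beta> where "\<beta> = real_of_ereal (inverse q)"
  note ia = ereal_inv_fin[OF assms(1), folded \<alpha>_def]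
  note ib = ereal_inv_fin[OF assms(2), folded \<beta>_def]
  have g12: "\<alpha> + \<beta> \<ge> 1/2"
  proof -
    have "ereal (1/2) \<le> ereal (\<alpha> + \<beta>)" using assms(4) ia(1) ib(1) by (simp add: divide_ereal_def)
    then show ?thesis by simp
  qed
  have invr: "inverse r = ereal (\<alpha> + \<beta>)" using assms(3) ia(1) ib(1) by (metis plus_ereal.simps(1))
  define r0 where "r0 = 1 / (\<alpha> + \<beta>)"
  have rr: "r = ereal r0" unfolding r0_def by (rule r_fin[OF invr]) (use g12 in linarith)
  have r0p: "r0 > 0" and r02: "r0 \<le> 2" using g12 unfolding r0_def by (auto simp: field_simps)
  define n where "n = real DIM('a)"
  have n1: "n \<ge> 1" unfolding n_def using DIM_positive[where 'a='a] by linarith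
  define k1 where "k1 = 1 + 1 / (4 * pi^2)"
  have k1p: "k1 > 1" unfolding k1_def by simp
  define C' where "C' = max C 0"
  define X where "X = (C' + 1)^2 + 1"
  have X1: "X \<ge> 1" unfolding X_def by simp
  define t where "t = 1 / (2 * k1 * X)"
  have t0: "t > 0" unfolding t_def using k1p X1 by simp
  have t1: "t \<le> 1" unfolding t_def using k1p X1 by (simp add: field_simps) (smt (verit) mult_le_cancel_left1 mult_mono)
  define z1 where "z1 = complex_of_real (pi^2) / (complex_of_real t - \<i> / 2)"
  define z2 where "z2 = complex_of_real t + complex_of_real (2 * pi^2) * \<i>"
  define K where "K = SS z1 ^ DIM('a) * SS z2 ^ DIM('a) * SS (complex_of_real (pi^2) / z2) ^ DIM('a) *
              SS (complex_of_real (t * (1 + 1 / (4 * pi^2)))) ^ DIM('a)"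
  define W where "W = z2 - complex_of_real (t / (4 * pi^2 + 1))"
  note fb = fam_basic[OF t0, folded z1_def z2_def]
  have fm1: "bilin_mult (\<lambda>(\<xi>::'a) \<eta>. cis (\<xi> \<bullet> \<eta>)) (EG z1) (EG z2) = (\<lambda>x. K * EG W x)"
    unfolding z1_def z2_def K_def W_def by (rule fam_M(1)[OF t0])
  have fm2: "Re W = 4 * pi^2 * t / (4 * pi^2 + 1)"
    unfolding W_def z2_def by (rule fam_M(2)[OF t0])
  have fm3: "norm K \<ge> sqrt (1 / (2 * t * (1 + 1 / (4 * pi^2)))) ^ DIM('a)"
    unfolding z1_def z2_def K_def by (rule fam_M(3)[OF t0])
  have Rz1: "Re z1 > 0" unfolding fb(1) using t0 by (simp add: add_pos_pos)
  have Rz2: "Re z2 > 0" unfolding fb(2) using t0 .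
  have RW: "Re W > 0" unfolding fm2 using t0 by (intro divide_pos_pos mult_pos_pos) (auto intro: add_pos_nonneg)
  have sf: "schwartz (EG z1 :: 'a \<Rightarrow> complex)" unfolding EG_def by (rule schwartz_gauss[OF Rz1])
  have sg: "schwartz (EG z2 :: 'a \<Rightarrow> complex)" unfolding EG_def by (rule schwartz_gauss[OF Rz2])
  have Cin: "Lp_norm r (\<lambda>x::'a. K * EG W x) \<le> ennreal C * Lp_norm p (EG z1 :: 'a \<Rightarrow> complex) * Lp_norm q (EG z2 :: 'a \<Rightarrow> complex)"
    using C[OF sf sg] unfolding fm1 .
  define V where "V = (pi / 2) / t"
  have V0: "V > 0" unfolding V_def using t0 by simp
  have normEG: "norm (EG z x) = exp (- Re z * (x \<bullet> x))" for z and x :: 'a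
    unfolding EG_def by (simp add: norm_exp_eq_Re)
  have measEG: "EG z \<in> borel_measurable (borel :: 'a measure)" for z
    unfolding EG_def by measurable
  have bf: "Lp_norm p (EG z1 :: 'a \<Rightarrow> complex) \<le> ennreal (V powr (n * \<alpha> / 2))"
    unfolding n_def \<alpha>_def
  proof (rule Lp_upper[OF assms(1) Rz1 normEG measEG])
    have "t^2 + 1/4 \<le> pi^2"
    proof -
      have "t^2 \<le> 1" using t0 t1 by (simp add: power_le_one)
      moreover have "pi^2 \<ge> 3^2" using pi_gt3 by (intro power_mono) auto
      ultimately show ?thesis by simp
    qed
    then have h: "(t^2 + 1/4) / (2*pi*t) \<le> pi^2 / (2*pi*t)"
      by (rule divide_right_mono) (use t0 in simp)
    have e: "pi / (2 * (pi^2 * t / (t^2 + 1/4))) = (t^2 + 1/4) / (2*pi*t)"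
      using t0 by (simp add: field_simps power2_eq_square)
    have e2: "pi^2 / (2*pi*t) = (pi/2)/t" by (simp add: power2_eq_square field_simps)
    show "pi / (2 * Re z1) \<le> V" unfolding fb(1) V_def e using h e2 by simp
  qed
  have bg: "Lp_norm q (EG z2 :: 'a \<Rightarrow> complex) \<le> ennreal (V powr (n * \<beta> / 2))"
    unfolding n_def \<beta>_def
    by (rule Lp_upper[OF assms(2) Rz2 normEG measEG]) (simp add: fb(2) V_def)
  have mr: "Lp_norm r (\<lambda>x::'a. K * EG W x) = ennreal (norm K * (pi / (r0 * Re W)) powr (real DIM('a) / (2 * r0)))"
    unfolding rr by (rule Lp_gauss) (use RW r0p in \<open>auto simp: norm_mult normEG\<close>)
  have low: "norm K * V powr (n * \<alpha> / 2) * V powr (n * \<beta> / 2) \<le> norm K * (pi / (r0 * Re W)) powr (real DIM('a) / (2 * r0))"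
  proof -
    have e1: "V powr (n * \<alpha> / 2) * V powr (n * \<beta> / 2) = V powr (real DIM('a) / (2 * r0))"
      unfolding powr_add[symmetric] r0_def n_def by (simp add: field_simps)
    have "Re W \<le> t"
    proof -
      have p: "4*pi^2+1 > 0" by (intro add_pos_nonneg) auto
      have "4*pi^2/(4*pi^2+1) \<le> 1" using p by (simp add: divide_le_eq)
      then have "t * (4*pi^2/(4*pi^2+1)) \<le> t * 1" using t0 by (intro mult_left_mono) auto
      then show ?thesis unfolding fm2 by (simp add: mult_ac)
    qed
    then have hm: "r0 * Re W \<le> 2 * t" using mult_mono[of r0 2 "Re W" t] RW r0p r02 by simp
    have "pi / (2 * t) \<le> pi / (r0 * Re W)"
      by (rule divide_left_mono[OF hm]) (use RW r0p t0 in auto)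
    then have "V \<le> pi / (r0 * Re W)" unfolding V_def by simp
    then have "V powr (real DIM('a) / (2 * r0)) \<le> (pi / (r0 * Re W)) powr (real DIM('a) / (2 * r0))"
      using V0 r0p by (intro powr_mono2) auto
    then show ?thesis unfolding mult.assoc e1 by (rule mult_left_mono) simp
  qed
  have Kbig: "norm K > C'"
  proof -
    have e: "1 / (2 * t * (1 + 1 / (4 * pi^2))) = X" unfolding t_def k1_def[symmetric] using k1p X1 by simp
    have "C' + 1 < sqrt X" unfolding X_def
      by (rule real_less_rsqrt) (simp add: C'_def)
    also have "sqrt X \<le> sqrt X ^ DIM('a)"
      using power_increasing[of 1 "DIM('a)" "sqrt X"] X1 DIM_positive[where 'a='a] by simp
    also have "\<dots> \<le> norm K" using fm3 unfolding e .
    finally show ?thesis by simp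
  qed
  have "ennreal C * Lp_norm p (EG z1 :: 'a \<Rightarrow> complex) * Lp_norm q (EG z2 :: 'a \<Rightarrow> complex)
      \<le> ennreal C' * ennreal (V powr (n * \<alpha> / 2)) * ennreal (V powr (n * \<beta> / 2))"
    using bf bg by (intro mult_mono ennreal_leI) (auto simp: C'_def)
  also have "\<dots> = ennreal (C' * V powr (n * \<alpha> / 2) * V powr (n * \<beta> / 2))"
    by (simp add: ennreal_mult C'_def)
  also have "\<dots> < ennreal (norm K * V powr (n * \<alpha> / 2) * V powr (n * \<beta> / 2))"
    using Kbig V0 by (intro ennreal_lessI) (auto simp: C'_def intro!: mult_strict_right_mono)
  also have "\<dots> \<le> Lp_norm r (\<lambda>x::'a. K * EG W x)"
    unfolding mr by (rule ennreal_leI[OF low])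
  finally show False using Cin by simp
qed

end
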